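(* Let $X$ be a nonempty set, let $w$ be a convex metric modular on $X$, let $x_0\in X$ and let $X_w^*=\{x\in X:\exists\,\lambda>0,\ w_\lambda(x,x_0)<\infty\}$. Let $T\colon X_w^*\to X_w^*$ be a map and let $k\in(0,1)$, $\lambda_0>0$ be such that $w_{k\lambda}(Tx,Ty)\le w_\lambda(x,y)$ for all $0<\lambda\le\lambda_0$ and all $x,y\in X_w^*$. Let $0<\lambda<\lambda_0$ and let $\lambda_1,\lambda_2>0$ with $\lambda_1+\lambda_2=(1-k)\lambda$. Then $$w_\lambda(x,y)\le \frac{\lambda_1 w_{\lambda_1}(x,Tx)+\lambda_2 w_{\lambda_2}(y,Ty)}{\lambda(1-k)}$$ for every $x,y\in X_w^*$ such that $w_\lambda(x,y)<\infty$.
   Context: A metric modular on a nonempty set $X$ is a function $w\colon(0,\infty)\times X\times X\to[0,\infty]$, written $(\lambda,x,y)\mapsto w_\lambda(x,y)$, such that for all $x,y,z\in X$: (1) $w_\lambda(x,y)=0$ for all $\lambda>0$ if and only if $x=y$; (2) $w_\lambda(x,y)=w_\lambda(y,x)$ for all $\lambda>0$; (3) $w_{\lambda+\mu}(x,y)\le w_\lambda(x,z)+w_\mu(y,z)$ for all $\lambda,\mu>0$. The modular $w$ is convex if it satisfies $w_{\lambda+\mu}(x,y)\le \frac{\lambda}{\lambda+\mu}w_\lambda(x,z)+\frac{\mu}{\lambda+\mu}w_\mu(z,y)$ for all $\lambda,\mu>0$ and all $x,y,z\in X$. Arithmetic is in $[0,\infty]$. *)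

theory Defs
  imports "HOL-Library.Extended_Nonnegative_Real"
begin

text \<open>A metric modular on the (nonempty) type 'a, with values in [0,\<infinity>] (ennreal).
  Only the values at lam > 0 are relevant.\<close>
definition metric_modular :: "(real \<Rightarrow> 'a \<Rightarrow> 'a \<Rightarrow> ennreal) \<Rightarrow> bool" where
  "metric_modular w \<longleftrightarrow>
     (\<forall>x y. (\<forall>lam>0. w lam x y = 0) \<longleftrightarrow> x = y) \<and>
     (\<forall>lam>0. \<forall>x y. w lam x y = w lam y x) \<and>
     (\<forall>lam>0. \<forall>mu>0. \<forall>x y z. w (lam + mu) x y \<le> w lam x z + w mu y z)"

definition convex_modular :: "(real \<Rightarrow> 'a \<Rightarrow> 'a \<Rightarrow> ennreal) \<Rightarrow> bool" where
  "convex_modular w \<longleftrightarrow>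
     (\<forall>lam>0. \<forall>mu>0. \<forall>x y z.
        w (lam + mu) x y \<le> ennreal (lam / (lam + mu)) * w lam x z + ennreal (mu / (lam + mu)) * w mu z y)"

definition modular_space_star :: "(real \<Rightarrow> 'a \<Rightarrow> 'a \<Rightarrow> ennreal) \<Rightarrow> 'a \<Rightarrow> 'a set" where
  "modular_space_star w x0 = {x. \<exists>lam>0. w lam x x0 < \<infinity>}"

end

theory Submission
  imports Defs
begin

lemma ennreal_scale_le:
  assumes "W \<le> ennreal (a / l) * A + ennreal (b / l) * B" and "0 < l" and "0 \<le> a" and "0 \<le> b"
  shows "ennreal l * W \<le> ennreal a * A + ennreal b * B"
proof -
  have "ennreal l * W \<le> ennreal l * (ennreal (a / l) * A + ennreal (b / l) * B)"
    using assms(1) by (rule mult_left_mono) simp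
  also have "\<dots> = ennreal (l * (a / l)) * A + ennreal (l * (b / l)) * B"
    using assms by (simp add: distrib_left ennreal_mult[symmetric] mult.assoc[symmetric])
  also have "\<dots> = ennreal a * A + ennreal b * B" using assms by simp
  finally show ?thesis .
qed

theorem proposition4p3:
  fixes w :: "real \<Rightarrow> 'a \<Rightarrow> 'a \<Rightarrow> ennreal" and x0 :: 'a and T :: "'a \<Rightarrow> 'a"
    and k lam0 lam lam1 lam2 :: real
  assumes "metric_modular w" and "convex_modular w"
    and "\<forall>x\<in>modular_space_star w x0. T x \<in> modular_space_star w x0"
    and "0 < k" and "k < 1" and "0 < lam0"
    and "\<forall>mu. 0 < mu \<and> mu \<le> lam0 \<longrightarrow>
           (\<forall>x\<in>modular_space_star w x0. \<forall>y\<in>modular_space_star w x0.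
              w (k * mu) (T x) (T y) \<le> w mu x y)"
    and "0 < lam" and "lam < lam0" and "0 < lam1" and "0 < lam2"
    and "lam1 + lam2 = (1 - k) * lam"
  shows "\<forall>x\<in>modular_space_star w x0. \<forall>y\<in>modular_space_star w x0.
           w lam x y < \<infinity> \<longrightarrow>
           w lam x y \<le> (ennreal lam1 * w lam1 x (T x) + ennreal lam2 * w lam2 y (T y))
                         / ennreal (lam * (1 - k))"
proof (intro ballI impI)
  fix x y assume xs: "x \<in> modular_space_star w x0" and ys: "y \<in> modular_space_star w x0"
    and fin: "w lam x y < \<infinity>"
  define W where "W = w lam x y"
  define A where "A = w lam1 x (T x)"
  define B where "B = w lam2 y (T y)"
  define C where "C = w (k * lam) (T x) (T y)"
  define m where "m = lam - lam1"
  have m_eq: "m = k * lam + lam2" using assms(12) unfolding m_def by (simp add: algebra_simps)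
  have mpos: "0 < m" using m_eq assms by (simp add: add_pos_pos)
  have klpos: "0 < k * lam" using assms by simp
  have cv: "\<And>a b x y z. 0 < a \<Longrightarrow> 0 < b \<Longrightarrow>
      w (a + b) x y \<le> ennreal (a / (a + b)) * w a x z + ennreal (b / (a + b)) * w b z y"
    using assms(2) unfolding convex_modular_def by blast
  have sym: "w lam2 (T y) y = B"
    using assms(1) assms(11) unfolding metric_modular_def B_def by metis
  have s1: "W \<le> ennreal (lam1 / lam) * A + ennreal (m / lam) * w m (T x) y"
    using cv[OF assms(10) mpos, of x y "T x"] unfolding W_def A_def m_def by simp
  have s1': "ennreal lam * W \<le> ennreal lam1 * A + ennreal m * w m (T x) y"
    by (rule ennreal_scale_le[OF s1]) (use assms mpos in auto)
  have s2: "w m (T x) y \<le> ennreal (k * lam / m) * C + ennreal (lam2 / m) * B"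
    using cv[OF klpos assms(11), of "T x" y "T y"] sym unfolding C_def m_eq by simp
  have s2': "ennreal m * w m (T x) y \<le> ennreal (k * lam) * C + ennreal lam2 * B"
    by (rule ennreal_scale_le[OF s2]) (use assms mpos in auto)
  have cw: "C \<le> W"
    using assms(7) assms(8) assms(9) xs ys unfolding C_def W_def by auto
  have key: "ennreal lam * W \<le> ennreal lam1 * A + ennreal lam2 * B + ennreal (k * lam) * W"
  proof -
    have "ennreal lam * W \<le> ennreal lam1 * A + (ennreal (k * lam) * C + ennreal lam2 * B)"
      using s1' s2' by (meson add_left_mono order_trans)
    also have "\<dots> \<le> ennreal lam1 * A + (ennreal (k * lam) * W + ennreal lam2 * B)"
      using cw by (intro add_left_mono add_right_mono mult_left_mono) auto
    finally show ?thesis by (simp add: algebra_simps)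
  qed
  obtain r where r: "W = ennreal r" "0 \<le> r" using fin unfolding W_def
    by (cases "w lam x y") auto
  have dpos: "0 < lam * (1 - k)" using assms by simp
  show "w lam x y \<le> (ennreal lam1 * w lam1 x (T x) + ennreal lam2 * w lam2 y (T y))
                         / ennreal (lam * (1 - k))"
  proof (cases "ennreal lam1 * A + ennreal lam2 * B = \<infinity>")
    case True
    have "(ennreal lam1 * A + ennreal lam2 * B) / ennreal (lam * (1 - k)) = top"
      unfolding True by (metis ennreal_top_divide ennreal_neq_top infinity_ennreal_def)
    then show ?thesis unfolding A_def B_def by simp
  next
    case False
    then obtain s where s: "ennreal lam1 * A + ennreal lam2 * B = ennreal s" "0 \<le> s"
      by (cases "ennreal lam1 * A + ennreal lam2 * B") auto
    have e1: "ennreal lam * W = ennreal (lam * r)"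
      using r assms(8) by (simp add: ennreal_mult)
    have e2: "ennreal (k * lam) * W = ennreal (k * lam * r)"
      using r klpos by (simp add: ennreal_mult)
    have e3: "ennreal s + ennreal (k * lam * r) = ennreal (s + k * lam * r)"
      using s(2) r(2) klpos by (simp add: ennreal_plus)
    have "ennreal (lam * r) \<le> ennreal (s + k * lam * r)"
      using key unfolding s(1) e1 e2 e3 .
    hence "lam * r \<le> s + k * lam * r"
      using s r klpos by (subst (asm) ennreal_le_iff) auto
    hence "r * (lam * (1 - k)) \<le> s" by (simp add: algebra_simps)
    hence "r \<le> s / (lam * (1 - k))" using dpos by (simp add: le_divide_eq)
    hence "ennreal r \<le> ennreal (s / (lam * (1 - k)))" by (rule ennreal_leI)
    also have "\<dots> = ennreal s / ennreal (lam * (1 - k))"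
      by (rule divide_ennreal[OF s(2) dpos, symmetric])
    finally have "W \<le> (ennreal lam1 * A + ennreal lam2 * B) / ennreal (lam * (1 - k))"
      unfolding s(1) r(1) .
    then show ?thesis unfolding W_def A_def B_def .
  qed
qed

end
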